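(* Let $G$ be a finite group with an abelian normal subgroup $A$ such that $G/A$ is cyclic, and let $s$ be an automorphism of $G$ of order $2$ with $s(A)=A$. Suppose there is a subgroup $H\le G$ with $H\cap A=\{1\}$ and $G = s(H)H$. Then $A$ has a cyclic subgroup of index at most $2$.
   Context: $s(H)H$ denotes the set of products $ab$ with $a\in s(H)$, $b\in H$. *)

theory Defs
  imports "HOL-Algebra.Algebra"
begin

end

theory Submission
  imports Defs
begin

lemma funpow_back:
  assumes "f ` S \<subseteq> S" "inj_on f S" "x \<in> S"
    and "(f ^^ (i + d)) x = (f ^^ (j + d)) x"
  shows "(f ^^ i) x = (f ^^ j) x"
  using assms(4)
proof (induction d)
  case 0 then show ?case by simp
next
  case (Suc d)
  have inS: "(f ^^ n) x \<in> S" for n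
    by (induction n) (use assms in auto)
  have "f ((f ^^ (i + d)) x) = f ((f ^^ (j + d)) x)" using Suc.prems by simp
  then have "(f ^^ (i + d)) x = (f ^^ (j + d)) x"
    using assms(2) inS inj_onD by metis
  then show ?case using Suc.IH by simp
qed

lemma orbit_period:
  fixes f :: "'a \<Rightarrow> 'a"
  assumes fin: "finite S" and fS: "f ` S \<subseteq> S" and inj: "inj_on f S" and x: "x \<in> S"
    and S: "S = range (\<lambda>t. (f ^^ t) x)"
  shows "(f ^^ (t mod card S)) x = (f ^^ t) x \<and> inj_on (\<lambda>t. (f ^^ t) x) {..<card S}"
proof -
  define g where "g = (\<lambda>t. (f ^^ t) x)"
  have inS: "g n \<in> S" for n unfolding g_def
    by (induction n) (use fS x in auto)
  have "\<not> inj_on g {..card S}"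
  proof
    assume "inj_on g {..card S}"
    then have "card (g ` {..card S}) = card S + 1" by (simp add: card_image)
    moreover have "g ` {..card S} \<subseteq> S" using inS by auto
    ultimately show False using card_mono[OF fin, of "g ` {..card S}"] by linarith
  qed
  then obtain i j where ij: "i < j" "g i = g j"
    unfolding inj_on_def by (metis linorder_neqE_nat)
  have bk: "g 0 = g d" if "g i1 = g (i1 + d)" for i1 d
    using funpow_back[OF fS inj x, of 0 i1 d] that unfolding g_def by (simp add: add.commute)
  have ex: "\<exists>p>0. g p = x"
    using bk[of i "j - i"] ij by (rule_tac x="j-i" in exI) (auto simp: g_def)
  define P where "P = (LEAST p. p > 0 \<and> g p = x)"
  have P: "P > 0" "g P = x" using LeastI_ex[OF ex] unfolding P_def by auto
  have Pmin: "\<not> (p > 0 \<and> g p = x)" if "p < P" for p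
    using not_less_Least[of p "\<lambda>p. p > 0 \<and> g p = x"] that unfolding P_def by blast
  have per: "g (t + P) = g t" for t
    using P by (simp add: g_def funpow_add)
  have permod: "g t = g (t mod P)" for t
  proof (induction t rule: less_induct)
    case (less t)
    show ?case
    proof (cases "t < P")
      case True then show ?thesis by simp
    next
      case False
      then have "t = (t - P) + P" by simp
      then have "g t = g (t - P)" using per by metis
      also have "\<dots> = g ((t - P) mod P)" using less P False by simp
      also have "(t - P) mod P = t mod P" using False by (simp add: mod_if)
      finally show ?thesis .
    qed
  qed
  have injP: "inj_on g {..<P}"
  proof (rule inj_onI, rule ccontr)
    fix a c assume a: "a \<in> {..<P}" and c: "c \<in> {..<P}" and eq: "g a = g c" and ne: "a \<noteq> c"
    have "\<exists>a c. a < c \<and> c < P \<and> g a = g c" using a c eq ne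
      by (metis lessThan_iff linorder_neqE_nat)
    then obtain a c where ac: "a < c" "c < P" "g a = g c" by blast
    then have "g 0 = g (c - a)" using bk[of a "c - a"] by simp
    moreover have "c - a < P" "c - a > 0" using ac by auto
    ultimately show False using Pmin[of "c - a"] by (simp add: g_def)
  qed
  have "S = g ` {..<P}"
  proof
    show "S \<subseteq> g ` {..<P}"
    proof
      fix y assume "y \<in> S"
      then obtain t where "y = g t" using S unfolding g_def by auto
      then have "y = g (t mod P)" using permod by simp
      moreover have "t mod P \<in> {..<P}" using P(1) by simp
      ultimately show "y \<in> g ` {..<P}" by blast
    qed
    show "g ` {..<P} \<subseteq> S" using inS by auto
  qed
  then have "card S = P" using injP by (simp add: card_image)
  then show ?thesis using permod injP unfolding g_def by metis
qed


definition cs :: "('a, 'b) monoid_scheme \<Rightarrow> ('a \<Rightarrow> 'a) \<Rightarrow> 'a \<Rightarrow> nat \<Rightarrow> 'a" where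
  "cs M \<psi> b t = ((\<lambda>y. \<psi> y \<otimes>\<^bsub>M\<^esub> b) ^^ t) \<one>\<^bsub>M\<^esub>"

lemma cs_0 [simp]: "cs M \<psi> b 0 = \<one>\<^bsub>M\<^esub>" by (simp add: cs_def)
lemma cs_Suc [simp]: "cs M \<psi> b (Suc t) = \<psi> (cs M \<psi> b t) \<otimes>\<^bsub>M\<^esub> b" by (simp add: cs_def)

lemma (in group) gen_nat:
  assumes "finite (carrier G)" "a \<in> carrier G"
  shows "generate G {a} = range (\<lambda>k::nat. a [^] k)"
  using generate_pow_on_finite_carrier[OF assms] by auto

lemma (in comm_group) card_ker_img:
  assumes fin: "finite Q" and Q: "Q \<subseteq> carrier G" and one: "\<one> \<in> Q"
    and mc: "\<And>x y. x \<in> Q \<Longrightarrow> y \<in> Q \<Longrightarrow> x \<otimes> y \<in> Q"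
    and ic: "\<And>x. x \<in> Q \<Longrightarrow> inv x \<in> Q"
    and fh: "\<And>x y. x \<in> Q \<Longrightarrow> y \<in> Q \<Longrightarrow> f (x \<otimes> y) = f x \<otimes> f y"
    and fc: "\<And>x. x \<in> Q \<Longrightarrow> f x \<in> carrier G"
  shows "card Q = card {x\<in>Q. f x = \<one>} * card (f ` Q)"
proof -
  define K where "K = {x\<in>Q. f x = \<one>}"
  have f1: "f \<one> = \<one>"
  proof -
    have "f \<one> \<otimes> f \<one> = f \<one> \<otimes> \<one>" using fh[OF one one] fc[OF one] by simp
    then show ?thesis using fc[OF one] l_cancel[of "f \<one>" "f \<one>" \<one>] by simp
  qed
  have finv: "f (inv x) = inv (f x)" if x: "x \<in> Q" for x
  proof -
    have "f x \<otimes> f (inv x) = f (x \<otimes> inv x)" using fh[OF x ic[OF x]] by simp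
    also have "x \<otimes> inv x = \<one>" using x Q by auto
    finally have "f x \<otimes> f (inv x) = \<one>" using f1 by simp
    then show ?thesis using comm_inv_char[OF fc[OF x] fc[OF ic[OF x]]] by simp
  qed
  have fib: "card {x\<in>Q. f x = z} = card K" if z: "z \<in> f ` Q" for z
  proof -
    from z obtain x0 where x0: "x0 \<in> Q" "f x0 = z" by blast
    have x0c: "x0 \<in> carrier G" using x0 Q by auto
    have "{x\<in>Q. f x = z} = (\<lambda>k. x0 \<otimes> k) ` K"
    proof
      show "{x\<in>Q. f x = z} \<subseteq> (\<lambda>k. x0 \<otimes> k) ` K"
      proof
        fix x assume x: "x \<in> {x\<in>Q. f x = z}"
        then have xQ: "x \<in> Q" and fx: "f x = z" by auto
        have xc: "x \<in> carrier G" using xQ Q by auto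
        have "f (inv x0 \<otimes> x) = inv (f x0) \<otimes> f x" using fh[OF ic[OF x0(1)] xQ] finv[OF x0(1)] by simp
        also have "\<dots> = \<one>" using fx x0 fc[OF x0(1)] by simp
        finally have "inv x0 \<otimes> x \<in> K" unfolding K_def using mc[OF ic[OF x0(1)] xQ] by simp
        moreover have "x = x0 \<otimes> (inv x0 \<otimes> x)" using x0c xc by (simp add: m_assoc[symmetric])
        ultimately show "x \<in> (\<lambda>k. x0 \<otimes> k) ` K" by blast
      qed
      show "(\<lambda>k. x0 \<otimes> k) ` K \<subseteq> {x\<in>Q. f x = z}"
      proof
        fix x assume "x \<in> (\<lambda>k. x0 \<otimes> k) ` K"
        then obtain k where k: "k \<in> Q" "f k = \<one>" "x = x0 \<otimes> k" unfolding K_def by blast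
        then have "f x = z" using fh[OF x0(1) k(1)] x0 fc[OF x0(1)] by simp
        then show "x \<in> {x\<in>Q. f x = z}" using k mc[OF x0(1) k(1)] by simp
      qed
    qed
    moreover have "inj_on (\<lambda>k. x0 \<otimes> k) K"
    proof (rule inj_onI)
      fix u v assume "u \<in> K" "v \<in> K" "x0 \<otimes> u = x0 \<otimes> v"
      then show "u = v" using Q x0c l_cancel[of x0 u v] unfolding K_def by auto
    qed
    ultimately show ?thesis by (simp add: card_image)
  qed
  have U: "Q = (\<Union>z\<in>f ` Q. {x\<in>Q. f x = z})" by auto
  have "card (\<Union>z\<in>f ` Q. {x\<in>Q. f x = z}) = (\<Sum>z\<in>f ` Q. card {x\<in>Q. f x = z})"
    apply (rule card_UN_disjoint)
    using fin apply simp
    using fin apply simp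
    apply blast
    done
  then have "card Q = (\<Sum>z\<in>f ` Q. card {x\<in>Q. f x = z})" using U by simp
  also have "\<dots> = (\<Sum>z\<in>f ` Q. card K)" using fib by simp
  finally show ?thesis unfolding K_def by simp
qed

lemma (in comm_group) sigma_sq:
  assumes sub: "subgroup Q G" and fin: "finite Q"
  shows "finprod G id Q \<otimes> finprod G id Q = \<one>"
proof -
  have QC: "Q \<subseteq> carrier G" using sub subgroup.subset by blast
  have invQ: "(\<lambda>x. inv x) ` Q = Q"
  proof
    show "(\<lambda>x. inv x) ` Q \<subseteq> Q" using subgroup.m_inv_closed[OF sub] by blast
    show "Q \<subseteq> (\<lambda>x. inv x) ` Q"
    proof
      fix x assume x: "x \<in> Q"
      then have "x = inv (inv x)" using QC by auto
      moreover have "inv x \<in> Q" using x subgroup.m_inv_closed[OF sub] by blast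
      ultimately show "x \<in> (\<lambda>x. inv x) ` Q" by blast
    qed
  qed
  have injinv: "inj_on (\<lambda>x. inv x) Q"
  proof (rule inj_onI)
    fix u v assume uv: "u \<in> Q" "v \<in> Q" "inv u = inv v"
    then have "inv (inv u) = inv (inv v)" by simp
    moreover have "u \<in> carrier G" "v \<in> carrier G" using uv QC by auto
    ultimately show "u = v" by simp
  qed
  have fQ: "id \<in> (\<lambda>x. inv x) ` Q \<rightarrow> carrier G" using invQ QC by auto
  have "finprod G id Q = finprod G id ((\<lambda>x. inv x) ` Q)" using invQ by simp
  also have "\<dots> = finprod G (\<lambda>x. id (inv x)) Q"
    using finprod_reindex[OF fQ injinv] .
  finally have e: "finprod G id Q = finprod G (\<lambda>x. inv x) Q" by simp
  have f1: "id \<in> Q \<rightarrow> carrier G" using QC by auto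
  have f2: "(\<lambda>x. inv x) \<in> Q \<rightarrow> carrier G" using QC by auto
  have "finprod G (\<lambda>x. id x \<otimes> inv x) Q = finprod G id Q \<otimes> finprod G (\<lambda>x. inv x) Q"
    using finprod_multf[OF f1 f2] .
  moreover have "finprod G (\<lambda>x. id x \<otimes> inv x) Q = finprod G (\<lambda>x. \<one>) Q"
  proof (rule finprod_cong')
    show "\<And>i. i \<in> Q \<Longrightarrow> id i \<otimes> inv i = \<one>" using QC by auto
  qed (use QC in auto)
  ultimately show ?thesis using e by simp
qed


locale cinst = comm_group G for G (structure) +
  fixes S :: "'a set" and \<psi> :: "'a \<Rightarrow> 'a" and b :: 'a
  assumes fin: "finite (carrier G)" and sub: "subgroup S G"
    and hom: "\<And>x y. x \<in> S \<Longrightarrow> y \<in> S \<Longrightarrow> \<psi> (x \<otimes> y) = \<psi> x \<otimes> \<psi> y"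
    and into: "\<And>x. x \<in> S \<Longrightarrow> \<psi> x \<in> S"
    and inj: "inj_on \<psi> S" and bS: "b \<in> S"
    and Sr: "S = range (cs G \<psi> b)"
begin

lemma SC: "S \<subseteq> carrier G" using sub subgroup.subset by blast
lemma finS: "finite S" using fin SC by (rule finite_subset[rotated])
lemma inC: "x \<in> S \<Longrightarrow> x \<in> carrier G" using SC by blast
lemma bC: "b \<in> carrier G" by (rule inC[OF bS])
lemma one_S: "\<one> \<in> S" by (rule subgroup.one_closed[OF sub])
lemma mS: "x \<in> S \<Longrightarrow> y \<in> S \<Longrightarrow> x \<otimes> y \<in> S" by (rule subgroup.m_closed[OF sub])
lemma iS: "x \<in> S \<Longrightarrow> inv x \<in> S" by (rule subgroup.m_inv_closed[OF sub])

lemma psi1: "\<psi> \<one> = \<one>"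
proof -
  have "\<psi> \<one> \<otimes> \<psi> \<one> = \<psi> (\<one> \<otimes> \<one>)" by (rule hom[OF one_S one_S, symmetric])
  also have "\<dots> = \<psi> \<one> \<otimes> \<one>" using inC[OF into[OF one_S]] by simp
  finally have "\<psi> \<one> \<otimes> \<psi> \<one> = \<psi> \<one> \<otimes> \<one>" .
  then show ?thesis using inC[OF into[OF one_S]] l_cancel[of "\<psi> \<one>" "\<psi> \<one>" \<one>] by simp
qed

lemma psi_inv: "x \<in> S \<Longrightarrow> \<psi> (inv x) = inv (\<psi> x)"
proof -
  assume x: "x \<in> S"
  have "\<psi> x \<otimes> \<psi> (inv x) = \<psi> (x \<otimes> inv x)" using hom[OF x iS[OF x]] by simp
  also have "x \<otimes> inv x = \<one>" using inC[OF x] by simp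
  finally have "\<psi> x \<otimes> \<psi> (inv x) = \<one>" using psi1 by simp
  then show ?thesis using comm_inv_char[OF inC[OF into[OF x]] inC[OF into[OF iS[OF x]]]] by simp
qed

lemma pow_S: "x \<in> S \<Longrightarrow> x [^] (n::nat) \<in> S"
  by (induction n) (simp_all add: one_S mS)

lemma psi_pow: "x \<in> S \<Longrightarrow> \<psi> (x [^] (n::nat)) = \<psi> x [^] n"
proof (induction n)
  case 0 then show ?case using psi1 by simp
next
  case (Suc n)
  have "x [^] n \<in> S" using Suc.prems by (rule pow_S)
  then have "\<psi> (x [^] Suc n) = \<psi> (x [^] n) \<otimes> \<psi> x" using hom Suc.prems by simp
  then show ?case using Suc by simp
qed

lemma cs_S: "cs G \<psi> b t \<in> S"
  by (induction t) (auto simp: one_S mS into bS)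

lemma cs_C: "cs G \<psi> b t \<in> carrier G" using cs_S inC by blast

definition T where "T = (\<lambda>y. \<psi> y \<otimes> b)"

lemma cs_T: "cs G \<psi> b t = (T ^^ t) \<one>" unfolding cs_def T_def by simp

lemma T_S: "T ` S \<subseteq> S" unfolding T_def using mS into bS by auto

lemma T_inj: "inj_on T S"
proof (rule inj_onI)
  fix x y assume xy: "x \<in> S" "y \<in> S" "T x = T y"
  then have "\<psi> x = \<psi> y" unfolding T_def using r_cancel[of b "\<psi> x" "\<psi> y"] bC inC into by auto
  then show "x = y" using inj xy inj_onD by metis
qed

lemma period: "cs G \<psi> b (t mod card S) = cs G \<psi> b t \<and> inj_on (cs G \<psi> b) {..<card S}"
proof -
  have e: "(\<lambda>t. (T ^^ t) \<one>) = cs G \<psi> b" by (rule ext) (simp only: cs_T)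
  have "S = range (\<lambda>t. (T ^^ t) \<one>)" unfolding e by (rule Sr)
  from orbit_period[OF finS T_S T_inj one_S this, of t] show ?thesis
    unfolding e by (simp add: cs_T)
qed

lemma cardS_pos: "card S > 0" using finS one_S card_gt_0_iff by blast

lemma cs_eq_one: "cs G \<psi> b j = \<one> \<Longrightarrow> card S dvd j"
proof -
  assume a: "cs G \<psi> b j = \<one>"
  have "cs G \<psi> b (j mod card S) = cs G \<psi> b 0" using period a by simp
  moreover have "j mod card S \<in> {..<card S}" "0 \<in> {..<card S}" using cardS_pos by auto
  ultimately have "j mod card S = 0" using period inj_onD by metis
  then show ?thesis by (simp add: mod_eq_0_iff_dvd)
qed

lemma cs_card: "cs G \<psi> b (card S) = \<one>"
  using period[of "card S"] by simp

lemma exponent: "y \<in> S \<Longrightarrow> y [^] ord b = \<one>"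
proof -
  assume "y \<in> S"
  then obtain t where y: "y = cs G \<psi> b t" using Sr by blast
  have "cs G \<psi> b t [^] ord b = \<one>"
  proof (induction t)
    case 0 then show ?case by simp
  next
    case (Suc t)
    have "cs G \<psi> b (Suc t) [^] ord b = \<psi> (cs G \<psi> b t) [^] ord b \<otimes> b [^] ord b"
      using nat_pow_distrib inC into cs_S bC by simp
    also have "\<psi> (cs G \<psi> b t) [^] ord b = \<psi> (cs G \<psi> b t [^] ord b)" using psi_pow cs_S by simp
    also have "\<dots> = \<one>" using Suc psi1 by simp
    finally show ?case using bC by simp
  qed
  then show ?thesis using y by simp
qed

end


context cinst begin

definition dl where "dl y = \<psi> y \<otimes> inv y"

lemma dl_S: "x \<in> S \<Longrightarrow> dl x \<in> S" unfolding dl_def by (simp add: mS into iS)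
lemma dl_C: "x \<in> S \<Longrightarrow> dl x \<in> carrier G" using dl_S inC by blast

lemma dl_hom: "x \<in> S \<Longrightarrow> y \<in> S \<Longrightarrow> dl (x \<otimes> y) = dl x \<otimes> dl y"
proof -
  assume x: "x \<in> S" and y: "y \<in> S"
  have c: "x \<in> carrier G" "y \<in> carrier G" "\<psi> x \<in> carrier G" "\<psi> y \<in> carrier G"
    using x y inC into by auto
  have "dl (x \<otimes> y) = (\<psi> x \<otimes> \<psi> y) \<otimes> (inv x \<otimes> inv y)"
    unfolding dl_def using hom[OF x y] inv_mult[OF c(1,2)] by simp
  also have "\<dots> = dl x \<otimes> dl y" unfolding dl_def using c by (simp add: m_ac)
  finally show ?thesis .
qed

lemma psi_eq: "x \<in> S \<Longrightarrow> \<psi> x = dl x \<otimes> x"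
  unfolding dl_def using inC into by (simp add: m_assoc)

lemma dl_one_iff: "x \<in> S \<Longrightarrow> dl x = \<one> \<longleftrightarrow> \<psi> x = x"
proof -
  assume x: "x \<in> S"
  have c: "x \<in> carrier G" "\<psi> x \<in> carrier G" using x inC into by auto
  show ?thesis
  proof
    assume "dl x = \<one>" then show "\<psi> x = x" using psi_eq[OF x] c by simp
  next
    assume "\<psi> x = x" then show "dl x = \<one>" unfolding dl_def using c by simp
  qed
qed

lemma dl_psi: "x \<in> S \<Longrightarrow> \<psi> (dl x) = dl (\<psi> x)"
  unfolding dl_def using hom[OF into iS] psi_inv by simp

lemma dl_inv: "x \<in> S \<Longrightarrow> dl (inv x) = inv (dl x)"
proof -
  assume x: "x \<in> S"
  have c: "x \<in> carrier G" "\<psi> x \<in> carrier G" using x inC into by auto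
  show ?thesis unfolding dl_def using psi_inv[OF x] c by (simp add: inv_mult)
qed

lemma dl_one: "dl \<one> = \<one>" unfolding dl_def using psi1 by simp

lemma dl_pow: "x \<in> S \<Longrightarrow> dl (x [^] (n::nat)) = dl x [^] n"
proof (induction n)
  case 0 then show ?case using dl_one by simp
next
  case (Suc n)
  then show ?case using dl_hom[OF pow_S[OF Suc.prems] Suc.prems] by simp
qed

definition D where "D = dl ` S"

lemma D_S: "D \<subseteq> S" unfolding D_def using dl_S by auto

lemma sub_D: "subgroup D G"
proof (rule subgroupI)
  show "D \<subseteq> carrier G" using D_S SC by auto
  show "D \<noteq> {}" unfolding D_def using one_S by auto
  show "inv a \<in> D" if "a \<in> D" for a
  proof -
    from that obtain x where x: "x \<in> S" "a = dl x" unfolding D_def by blast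
    then have "inv a = dl (inv x)" using dl_inv by simp
    then show ?thesis unfolding D_def using iS[OF x(1)] by blast
  qed
  show "a \<otimes> c \<in> D" if "a \<in> D" "c \<in> D" for a c
  proof -
    from that obtain x y where x: "x \<in> S" "a = dl x" "y \<in> S" "c = dl y" unfolding D_def by blast
    then have "a \<otimes> c = dl (x \<otimes> y)" using dl_hom by simp
    then show ?thesis unfolding D_def using mS[OF x(1) x(3)] by blast
  qed
qed

lemma cs_dl: "cs G \<psi> (dl b) t = dl (cs G \<psi> b t)"
proof (induction t)
  case 0 then show ?case using dl_one by simp
next
  case (Suc t)
  have "dl (cs G \<psi> b (Suc t)) = dl (\<psi> (cs G \<psi> b t)) \<otimes> dl b"
    using dl_hom[OF into[OF cs_S] bS] by simp
  also have "\<dots> = \<psi> (dl (cs G \<psi> b t)) \<otimes> dl b" using dl_psi[OF cs_S] by simp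
  finally show ?case using Suc by simp
qed

lemma inst_D: "cinst G D \<psi> (dl b)"
proof -
  have h: "\<psi> (x \<otimes> y) = \<psi> x \<otimes> \<psi> y" if "x \<in> D" "y \<in> D" for x y
    using hom that D_S by blast
  have i: "\<psi> x \<in> D" if "x \<in> D" for x
  proof -
    from that obtain y where y: "y \<in> S" "x = dl y" unfolding D_def by blast
    then have "\<psi> x = dl (\<psi> y)" using dl_psi by simp
    then show ?thesis unfolding D_def using into[OF y(1)] by blast
  qed
  have j: "inj_on \<psi> D" using inj D_S inj_on_subset by blast
  have k: "dl b \<in> D" unfolding D_def using bS by blast
  have l: "D = range (cs G \<psi> (dl b))"
  proof -
    have "range (cs G \<psi> (dl b)) = dl ` range (cs G \<psi> b)" using cs_dl by (auto simp: image_iff)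
    then show ?thesis unfolding D_def using Sr by simp
  qed
  show ?thesis
    by (rule cinst.intro[OF comm_group_axioms cinst_axioms.intro[OF fin sub_D h i j k l]])
qed

end


context cinst begin

lemma cs_prod: "cs G \<psi> b t = b [^] t \<otimes> finprod G (cs G \<psi> (dl b)) {..<t}"
proof -
  interpret Di: cinst G D \<psi> "dl b" by (rule inst_D)
  have fc: "cs G \<psi> (dl b) \<in> A \<rightarrow> carrier G" for A using Di.cs_C by auto
  show ?thesis
  proof (induction t)
    case 0 then show ?case by simp
  next
    case (Suc t)
    define P where "P = finprod G (cs G \<psi> (dl b)) {..<t}"
    have Pc: "P \<in> carrier G" unfolding P_def using fc by simp
    have c1: "cs G \<psi> b t \<in> carrier G" using cs_C by simp
    have c2: "dl (cs G \<psi> b t) \<in> carrier G" using dl_C[OF cs_S] by simp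
    have "finprod G (cs G \<psi> (dl b)) {..<Suc t} = cs G \<psi> (dl b) t \<otimes> P"
      unfolding P_def lessThan_Suc by (rule finprod_insert) (use fc Di.cs_C in auto)
    also have "\<dots> = dl (cs G \<psi> b t) \<otimes> P" using cs_dl by simp
    finally have e1: "finprod G (cs G \<psi> (dl b)) {..<Suc t} = dl (cs G \<psi> b t) \<otimes> P" .
    have "cs G \<psi> b (Suc t) = (dl (cs G \<psi> b t) \<otimes> cs G \<psi> b t) \<otimes> b"
      using psi_eq[OF cs_S] by simp
    also have "\<dots> = (dl (cs G \<psi> b t) \<otimes> (b [^] t \<otimes> P)) \<otimes> b" using Suc P_def by simp
    also have "\<dots> = (b [^] t \<otimes> b) \<otimes> (dl (cs G \<psi> b t) \<otimes> P)"
      using Pc c2 bC by (simp add: m_ac)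
    finally show ?case using e1 by simp
  qed
qed

lemma mod_suc_eq: "0 < (N::nat) \<Longrightarrow> Suc j mod N = j mod N \<Longrightarrow> N = 1"
  using mod_Suc[of j N] by (auto split: if_splits)

lemma step:
  assumes IH: "card D < card S \<Longrightarrow> card D \<le> 2 * card (generate G {dl b})"
  shows "card S \<le> 2 * card (generate G {b})"
proof -
  interpret Di: cinst G D \<psi> "dl b" by (rule inst_D)
  define m where "m = card D"
  define c' where "c' = cs G \<psi> (dl b)"
  define c where "c = cs G \<psi> b"
  define F where "F = {y\<in>S. dl y = \<one>}"
  define B where "B = generate G {b}"
  define Bd where "Bd = generate G {dl b}"
  define q where "q = card Bd"
  have finD: "finite D" by (rule Di.finS)
  have m0: "m > 0" unfolding m_def by (rule Di.cardS_pos)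
  have c'm: "c' m = \<one>" unfolding c'_def m_def by (rule Di.cs_card)
  have c'dvd: "m dvd j" if "c' j = \<one>" for j using Di.cs_eq_one that unfolding c'_def m_def by blast
  have dlc: "dl (c t) = c' t" for t unfolding c_def c'_def using cs_dl by simp
  have cS: "c t \<in> S" for t unfolding c_def by (rule cs_S)
  have cC: "c t \<in> carrier G" for t unfolding c_def by (rule cs_C)
  have psicm: "\<psi> (c m) = c m" using dl_one_iff[OF cS] dlc c'm by simp
  have add: "c (t + m) = c t \<otimes> c m" for t
  proof (induction t)
    case 0 then show ?case using cC by (simp add: c_def)
  next
    case (Suc t)
    have "c (Suc t + m) = \<psi> (c (t + m)) \<otimes> b" by (simp add: c_def)
    also have "\<dots> = \<psi> (c t \<otimes> c m) \<otimes> b" using Suc by simp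
    also have "\<dots> = (\<psi> (c t) \<otimes> c m) \<otimes> b" using hom[OF cS cS] psicm by simp
    also have "\<dots> = (\<psi> (c t) \<otimes> b) \<otimes> c m" using cC inC[OF into[OF cS]] bC by (simp add: m_ac)
    also have "\<dots> = c (Suc t) \<otimes> c m" by (simp add: c_def)
    finally show ?case .
  qed
  have mul: "c (k * m) = c m [^] k" for k
  proof (induction k)
    case 0 then show ?case by (simp add: c_def)
  next
    case (Suc k)
    have "c (Suc k * m) = c (k * m + m)" by (simp add: add.commute)
    also have "\<dots> = c (k * m) \<otimes> c m" by (rule add)
    finally show ?case using Suc by simp
  qed
  have gen: "generate G {a} = range (\<lambda>k::nat. a [^] k)" if "a \<in> carrier G" for a
    using gen_nat[OF fin that] .
  have FB: "F \<subseteq> generate G {c m}"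
  proof
    fix y assume y: "y \<in> F"
    then obtain j where j: "y = c j" using Sr unfolding F_def c_def by blast
    then have "c' j = \<one>" using y dlc unfolding F_def by simp
    then obtain k where "j = k * m" using c'dvd by (metis dvd_def mult.commute)
    then have "y = c m [^] k" using j mul by simp
    then show "y \<in> generate G {c m}" using gen[OF cC] by simp
  qed
  have cardS: "card S = card F * m"
  proof -
    have "card S = card {x\<in>S. dl x = \<one>} * card (dl ` S)"
      by (rule card_ker_img[OF finS SC one_S mS iS dl_hom dl_C])
    then show ?thesis unfolding F_def m_def D_def .
  qed
  have BS: "B \<subseteq> S" unfolding B_def using generate_subgroup_incl[OF _ sub] bS by simp
  have finB: "finite B" using BS finS finite_subset by blast
  have BdD: "Bd \<subseteq> D" unfolding Bd_def using generate_subgroup_incl[OF _ sub_D] Di.bS by simp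
  have Bgen: "B = range (\<lambda>k::nat. b [^] k)" unfolding B_def by (rule gen[OF bC])
  have Bdgen: "Bd = range (\<lambda>k::nat. dl b [^] k)" unfolding Bd_def by (rule gen[OF dl_C[OF bS]])
  have dlB: "dl ` B = Bd" unfolding Bgen Bdgen using dl_pow[OF bS] by (auto simp: image_iff)
  have cardB: "card B = card (B \<inter> F) * q"
  proof -
    have "card B = card {x\<in>B. dl x = \<one>} * card (dl ` B)"
    proof (rule card_ker_img[OF finB])
      show "B \<subseteq> carrier G" using BS SC by auto
      show "\<one> \<in> B" unfolding B_def by (rule generate.one)
      show "x \<otimes> y \<in> B" if "x \<in> B" "y \<in> B" for x y using that unfolding B_def by (rule generate.eng)
      show "inv x \<in> B" if "x \<in> B" for x
        using that generate_m_inv_closed[of "{b}" x] bC unfolding B_def by auto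
      show "dl (x \<otimes> y) = dl x \<otimes> dl y" if "x \<in> B" "y \<in> B" for x y using that BS dl_hom by auto
      show "dl x \<in> carrier G" if "x \<in> B" for x using that BS dl_C by auto
    qed
    moreover have "{x\<in>B. dl x = \<one>} = B \<inter> F" unfolding F_def using BS by auto
    ultimately show ?thesis using dlB q_def by simp
  qed
  have q_ord: "q = ord (dl b)" unfolding q_def Bd_def using generate_pow_card[OF dl_C[OF bS]] by simp
  have qm: "q \<le> m" unfolding q_def m_def using BdD finD card_mono by blast
  define P where "P = finprod G c' {..<m}"
  have cmP: "c m = b [^] m \<otimes> P" unfolding P_def c_def c'_def by (rule cs_prod)
  have Dimg: "c' ` {..<m} = D"
  proof
    show "c' ` {..<m} \<subseteq> D" unfolding c'_def using Di.cs_S by auto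
    show "D \<subseteq> c' ` {..<m}"
    proof
      fix y assume "y \<in> D"
      then obtain t where t: "y = c' t" using Di.Sr unfolding c'_def by blast
      have "c' (t mod m) = c' t" using Di.period unfolding c'_def m_def by blast
      moreover have "t mod m \<in> {..<m}" using m0 by simp
      ultimately show "y \<in> c' ` {..<m}" using t by (metis image_eqI)
    qed
  qed
  have injc': "inj_on c' {..<m}" using Di.period unfolding c'_def m_def by blast
  have PD: "P = finprod G id D"
  proof -
    have "finprod G id (c' ` {..<m}) = finprod G (\<lambda>x. id (c' x)) {..<m}"
      by (rule finprod_reindex) (use Dimg Di.SC injc' in auto)
    then show ?thesis using Dimg unfolding P_def by (simp add: comp_def)
  qed
  have PP: "P \<otimes> P = \<one>" unfolding PD by (rule sigma_sq[OF sub_D finD])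
  have Pc: "P \<in> carrier G" unfolding P_def using Di.cs_C unfolding c'_def by auto
  show ?thesis
  proof (cases "m = q")
    case True
    define g where "g = c m"
    have gC: "g \<in> carrier G" unfolding g_def by (rule cC)
    have gF: "g \<in> F" unfolding g_def F_def using cS dlc c'm by simp
    have g2: "g [^] (2::nat) = b [^] (2 * m)"
    proof -
      have "g [^] (2::nat) = (b [^] m \<otimes> P) \<otimes> (b [^] m \<otimes> P)" unfolding g_def cmP
        using bC Pc by (simp add: numeral_2_eq_2)
      also have "\<dots> = (b [^] m \<otimes> b [^] m) \<otimes> (P \<otimes> P)" using bC Pc by (simp add: m_ac)
      also have "\<dots> = b [^] (2 * m)" using PP bC by (simp add: nat_pow_mult mult_2)
      finally show ?thesis .
    qed
    have fg: "finite (generate G {g})" using fin generate_incl[of "{g}"] gC finite_subset by auto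
    have c1: "card F \<le> ord g"
      using card_mono[OF fg] FB generate_pow_card[OF gC] unfolding g_def by simp
    have c2: "ord g \<le> 2 * ord (g [^] (2::nat))"
    proof -
      have o: "ord (g [^] (2::nat)) = ord g div gcd (ord g) 2" using ord_pow_gen[OF gC, of 2] by simp
      have "gcd (ord g) 2 dvd 2" by simp
      then have "gcd (ord g) 2 \<le> 2" by (simp add: dvd_imp_le)
      moreover have "ord g = gcd (ord g) 2 * (ord g div gcd (ord g) 2)" by simp
      ultimately show ?thesis using o by (metis mult_le_mono1)
    qed
    have c3: "ord (g [^] (2::nat)) \<le> card (B \<inter> F)"
    proof -
      have g2C: "g [^] (2::nat) \<in> carrier G" using gC by simp
      have "generate G {g [^] (2::nat)} \<subseteq> B \<inter> F"
      proof
        fix y assume "y \<in> generate G {g [^] (2::nat)}"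
        then obtain k :: nat where k: "y = (g [^] (2::nat)) [^] k" using gen[OF g2C] by auto
        have "y = b [^] (2 * m * k)" using k g2 bC by (simp add: nat_pow_pow)
        then have "y \<in> B" using Bgen by simp
        moreover have "y \<in> F"
        proof -
          have gS: "g \<in> S" using gF unfolding F_def by simp
          have "y = g [^] (2 * k)" using k gC by (simp add: nat_pow_pow)
          moreover have "dl (g [^] (2 * k)) = \<one>" using dl_pow[OF gS] gF unfolding F_def by simp
          ultimately show ?thesis unfolding F_def using pow_S[OF gS] by simp
        qed
        ultimately show "y \<in> B \<inter> F" by simp
      qed
      moreover have "finite (B \<inter> F)" using finB by simp
      ultimately show ?thesis using generate_pow_card[OF g2C] card_mono by metis
    qed
    have "card S = card F * m" by (rule cardS)
    also have "\<dots> \<le> 2 * card (B \<inter> F) * q" using c1 c2 c3 True by simp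
    also have "\<dots> = 2 * card B" using cardB by simp
    finally show ?thesis unfolding B_def .
  next
    case False
    then have qlm: "q < m" using qm by simp
    have lt: "card D < card S"
    proof (rule ccontr)
      assume "\<not> card D < card S"
      then have DS: "D = S" using D_S finS card_seteq by (metis linorder_not_less)
      obtain y where y: "y \<in> S" "dl y = inv b" using DS iS[OF bS] unfolding D_def by (metis imageE)
      have yc: "y \<in> carrier G" using inC[OF y(1)] .
      have "\<psi> y \<otimes> b = (inv b \<otimes> y) \<otimes> b" using psi_eq[OF y(1)] y(2) by simp
      also have "\<dots> = (y \<otimes> inv b) \<otimes> b" using yc bC by (simp add: m_comm)
      also have "\<dots> = y" using yc bC by (simp add: m_assoc)
      finally have Ty: "\<psi> y \<otimes> b = y" .
      obtain j where j: "y = c j" using Sr y unfolding c_def by blast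
      have "c (Suc j) = c j" using Ty j by (simp add: c_def)
      then have "c (Suc j mod card S) = c (j mod card S)" using period unfolding c_def by metis
      moreover have "Suc j mod card S \<in> {..<card S}" "j mod card S \<in> {..<card S}" using cardS_pos by auto
      ultimately have "Suc j mod card S = j mod card S" using period inj_onD unfolding c_def by metis
      then have "card S = 1" using mod_suc_eq cardS_pos by blast
      then have "m = 1" using DS m_def by simp
      moreover have "q \<ge> 1" unfolding q_def Bd_def
        using generate_pow_card[OF dl_C[OF bS]] ord_ge_1[OF fin dl_C[OF bS]] by simp
      ultimately show False using qlm by simp
    qed
    have mq: "m \<le> 2 * q" using IH[OF lt] unfolding m_def q_def Bd_def .
    obtain y where y: "y \<in> D" "y \<notin> Bd"
      using qlm BdD unfolding q_def m_def by (metis subset_antisym subsetI less_irrefl)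
    have yC: "y \<in> carrier G" using y Di.SC by auto
    have subBd: "subgroup Bd G" unfolding Bd_def using generate_is_subgroup dl_C[OF bS] by simp
    have BdC: "Bd \<subseteq> carrier G" using subBd subgroup.subset by blast
    have finBd: "finite Bd" using BdD finD finite_subset by blast
    define yB where "yB = (\<lambda>x. y \<otimes> x) ` Bd"
    have injy: "inj_on (\<lambda>x. y \<otimes> x) Bd"
      by (rule inj_onI) (use yC BdC l_cancel in blast)
    have cyB: "card yB = q" unfolding yB_def q_def using injy by (simp add: card_image)
    have disj: "Bd \<inter> yB = {}"
    proof (rule ccontr)
      assume "Bd \<inter> yB \<noteq> {}"
      then obtain x where x: "x \<in> Bd" "y \<otimes> x \<in> Bd" unfolding yB_def by blast
      have "y = (y \<otimes> x) \<otimes> inv x" using x yC BdC by (simp add: m_assoc subsetD)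
      moreover have "(y \<otimes> x) \<otimes> inv x \<in> Bd"
        using x subgroup.m_closed[OF subBd] subgroup.m_inv_closed[OF subBd] by blast
      ultimately show False using y by simp
    qed
    have yBD: "yB \<subseteq> D" unfolding yB_def using y BdD subgroup.m_closed[OF sub_D] by blast
    have Dsplit: "D = Bd \<union> yB"
    proof -
      have "card (Bd \<union> yB) = q + q" using disj cyB finBd yB_def
        by (simp add: card_Un_disjoint q_def)
      then have "card D \<le> card (Bd \<union> yB)" using mq m_def by simp
      moreover have "Bd \<union> yB \<subseteq> D" using BdD yBD by simp
      ultimately show ?thesis using finD card_seteq by metis
    qed
    define \<Sigma> where "\<Sigma> = finprod G id Bd"
    have \<Sigma>C: "\<Sigma> \<in> carrier G" unfolding \<Sigma>_def by (rule finprod_closed) (use BdC in auto)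
    have \<Sigma>\<Sigma>: "\<Sigma> \<otimes> \<Sigma> = \<one>" unfolding \<Sigma>_def by (rule sigma_sq[OF subBd finBd])
    have fyB: "finprod G id yB = y [^] q \<otimes> \<Sigma>"
    proof -
      have "finprod G id yB = finprod G (\<lambda>x. id (y \<otimes> x)) Bd"
        unfolding yB_def by (rule finprod_reindex) (use yC BdC injy in auto)
      also have "\<dots> = finprod G (\<lambda>x. y \<otimes> id x) Bd" by simp
      also have "\<dots> = finprod G (\<lambda>x. y) Bd \<otimes> finprod G id Bd"
        by (rule finprod_multf) (use yC BdC in auto)
      also have "finprod G (\<lambda>x. y) Bd = y [^] q" unfolding q_def by (rule finprod_const[OF yC])
      also have "finprod G id Bd = \<Sigma>" unfolding \<Sigma>_def ..
      finally show ?thesis .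
    qed
    have yq: "y [^] q = \<one>" using Di.exponent[OF y(1)] q_ord by simp
    have "P = finprod G id Bd \<otimes> finprod G id yB"
      unfolding PD Dsplit by (rule finprod_Un_disjoint) (use finBd yB_def disj BdC yBD Di.SC yC in auto)
    also have "\<dots> = \<one>" using fyB yq \<Sigma>\<Sigma> \<Sigma>C unfolding \<Sigma>_def[symmetric] by simp
    finally have P1: "P = \<one>" .
    have "F \<subseteq> B"
    proof
      fix z assume "z \<in> F"
      then obtain k :: nat where "z = c m [^] k" using FB gen[OF cC] by auto
      then have "z = b [^] (m * k)" using cmP P1 bC by (simp add: nat_pow_pow)
      then show "z \<in> B" using Bgen by simp
    qed
    then have "B \<inter> F = F" by blast
    then have "card S = card (B \<inter> F) * m" using cardS by simp
    also have "\<dots> \<le> card (B \<inter> F) * (2 * q)" using mq by simp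
    also have "\<dots> = 2 * card B" using cardB by simp
    finally show ?thesis unfolding B_def .
  qed
qed

end


lemma (in comm_group) main_pure:
  "cinst G S \<psi> b \<Longrightarrow> card S \<le> 2 * card (generate G {b})"
proof (induction "card S" arbitrary: S b rule: less_induct)
  case less
  interpret I: cinst G S \<psi> b by (rule less.prems)
  show ?case
  proof (rule I.step)
    assume "card I.D < card S"
    then show "card I.D \<le> 2 * card (generate G {I.dl b})" using less.hyps I.inst_D by blast
  qed
qed


lemma (in group) inv_cancel_left:
  "x \<in> carrier G \<Longrightarrow> y \<in> carrier G \<Longrightarrow> inv x \<otimes> (x \<otimes> y) = y"
  by (simp add: m_assoc[symmetric])

lemma (in group) inv_cancel_left2:
  "x \<in> carrier G \<Longrightarrow> y \<in> carrier G \<Longrightarrow> x \<otimes> (inv x \<otimes> y) = y"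
  by (simp add: m_assoc[symmetric])

lemma (in group) pow_card_sub:
  assumes K: "subgroup K G" and fK: "finite K" and x: "x \<in> K"
  shows "x [^] card K = \<one>"
proof -
  define SG where "SG = subgroup_generated G K"
  have g: "group SG" unfolding SG_def by (rule group_subgroup_generated)
  have c: "carrier SG = K" unfolding SG_def using subgroup.carrier_subgroup_generated_subgroup[OF K] .
  have "x [^]\<^bsub>SG\<^esub> order SG = \<one>\<^bsub>SG\<^esub>" using group.pow_order_eq_1[OF g] x c by simp
  moreover have "order SG = card K" unfolding order_def c ..
  moreover have "x [^]\<^bsub>SG\<^esub> (n::nat) = x [^] n" for n unfolding SG_def pow_subgroup_generated ..
  moreover have "\<one>\<^bsub>SG\<^esub> = \<one>" unfolding SG_def subgroup_generated_def by simp
  ultimately show ?thesis by simp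
qed

lemma (in group) card_setmult:
  assumes U: "subgroup U G" and V: "subgroup V G" and UV: "U \<inter> V = {\<one>}"
    and fU: "finite U" and fV: "finite V"
  shows "card (U <#> V) = card U * card V"
proof -
  have UC: "U \<subseteq> carrier G" and VC: "V \<subseteq> carrier G" using U V subgroup.subset by blast+
  have e: "U <#> V = (\<lambda>(x,y). x \<otimes> y) ` (U \<times> V)" unfolding set_mult_def by auto
  have inj: "inj_on (\<lambda>(x,y). x \<otimes> y) (U \<times> V)"
  proof (rule inj_onI, clarify)
    fix x y x' y' assume xy: "x \<in> U" "y \<in> V" "x' \<in> U" "y' \<in> V" and eq: "x \<otimes> y = x' \<otimes> y'"
    have c: "x \<in> carrier G" "y \<in> carrier G" "x' \<in> carrier G" "y' \<in> carrier G" using xy UC VC by auto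
    have "inv x' \<otimes> x = y' \<otimes> inv y"
    proof -
      have "inv x' \<otimes> (x \<otimes> y) \<otimes> inv y = inv x' \<otimes> (x' \<otimes> y') \<otimes> inv y" using eq by simp
      then have e1: "inv x' \<otimes> x \<otimes> y = y'" using c by (simp add: m_assoc[symmetric])
      have "y' \<otimes> inv y = (inv x' \<otimes> x \<otimes> y) \<otimes> inv y" using e1 by simp
      also have "\<dots> = (inv x' \<otimes> x) \<otimes> (y \<otimes> inv y)" using c by (simp add: m_assoc)
      also have "\<dots> = inv x' \<otimes> x" using c by simp
      finally show ?thesis by simp
    qed
    moreover have "inv x' \<otimes> x \<in> U" using xy U subgroup.m_closed subgroup.m_inv_closed by metis
    moreover have "y' \<otimes> inv y \<in> V" using xy V subgroup.m_closed subgroup.m_inv_closed by metis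
    ultimately have "inv x' \<otimes> x = \<one>" "y' \<otimes> inv y = \<one>" using UV by auto
    then have "x = x'" "y' = y" using c by (metis inv_equality inv_inv inv_closed)+
    then show "x = x' \<and> y = y'" by simp
  qed
  show ?thesis unfolding e using card_image[OF inj] fU fV by (simp add: card_cartesian_product)
qed


lemma (in group) frontend:
  assumes fin: "finite (carrier G)" and nA: "A \<lhd> G" and cA: "comm_group (G\<lparr>carrier := A\<rparr>)"
    and cyc: "cyclic_group (G Mod A)" and s: "s \<in> iso G G" and sA: "s ` A = A"
    and H: "subgroup H G" and HA: "H \<inter> A = {\<one>}" and GKH: "carrier G = (s ` H) <#> H"
  shows "\<exists>b\<in>A. card A \<le> 2 * card (generate G {b})"
proof -
  interpret N: normal A G by (rule nA)
  define Q where "Q = G Mod A"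
  define K where "K = s ` H"
  have subA: "subgroup A G" by (rule N.subgroup_axioms)
  have AC: "A \<subseteq> carrier G" using subA subgroup.subset by blast
  have HC: "H \<subseteq> carrier G" using H subgroup.subset by blast
  have finA: "finite A" using fin AC finite_subset by blast
  have finH: "finite H" using fin HC finite_subset by blast
  have Qg: "group Q" unfolding Q_def by (rule N.factorgroup_is_group)
  have Qc: "comm_group Q" unfolding Q_def using group.cyclic_imp_abelian_group[OF N.factorgroup_is_group cyc] .
  have pihom: "(\<lambda>g. A #> g) \<in> hom G Q" unfolding Q_def by (rule N.r_coset_hom_Mod)
  interpret pi: group_hom G Q "\<lambda>g. A #> g"
    using pihom Qg by (simp add: group_hom_def group_hom_axioms_def is_group)
  have one_Q: "\<one>\<^bsub>Q\<^esub> = A" unfolding Q_def by simp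
  have QQ: "A \<otimes>\<^bsub>Q\<^esub> A = A" using one_Q group.is_monoid[OF Qg] by (metis monoid.l_one monoid.one_closed)
  have ker: "g \<in> A" if "g \<in> carrier G" "A #> g = A" for g
    using coset_join1[OF that(2) that(1) subA] .
  have kerI: "A #> g = A" if "g \<in> A" for g using coset_join2[OF _ subA that] that AC by blast
  have eqmod: "y \<otimes> inv z \<in> A" if "y \<in> carrier G" "z \<in> carrier G" "A #> y = A #> z" for y z
  proof -
    have "y \<in> A #> z" using rcos_self[OF that(1) subA] that(3) by simp
    then obtain a where a: "a \<in> A" "y = a \<otimes> z" unfolding r_coset_def by blast
    then have "y \<otimes> inv z = a" using that AC by (simp add: m_assoc subsetD)
    then show ?thesis using a by simp
  qed
  have shom: "s \<in> hom G G" and sbij: "bij_betw s (carrier G) (carrier G)" using s unfolding iso_def by auto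
  interpret sh: group_hom G G s using shom by (simp add: group_hom_def group_hom_axioms_def is_group)
  have sinj: "inj_on s (carrier G)" using sbij bij_betw_imp_inj_on by blast
  have Ksub: "subgroup K G" unfolding K_def by (rule sh.subgroup_img_is_subgroup[OF H])
  have KC: "K \<subseteq> carrier G" using Ksub subgroup.subset by blast
  have finK: "finite K" unfolding K_def using finH by simp
  have cardK: "card K = card H" unfolding K_def using card_image inj_on_subset[OF sinj HC] by blast
  have KA: "K \<inter> A = {\<one>}"
  proof
    show "K \<inter> A \<subseteq> {\<one>}"
    proof
      fix z assume z: "z \<in> K \<inter> A"
      then obtain h where h: "h \<in> H" "z = s h" unfolding K_def by blast
      have "z \<in> s ` A" using z sA by simp
      then obtain a where a: "a \<in> A" "z = s a" by blast
      have "h = a" using sinj h a HC AC inj_onD by (metis subsetD)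
      then have "h = \<one>" using HA h a by blast
      then show "z \<in> {\<one>}" using h by simp
    qed
    show "{\<one>} \<subseteq> K \<inter> A" using subgroup.one_closed[OF Ksub] subgroup.one_closed[OF subA] by simp
  qed
  define n where "n = card H"
  have n0: "n > 0" unfolding n_def using finH subgroup.one_closed[OF H] card_gt_0_iff by blast
  have powK: "k [^] n = \<one>" if "k \<in> K" for k using pow_card_sub[OF Ksub finK that] cardK n_def by simp
  have powH: "h [^] n = \<one>" if "h \<in> H" for h using pow_card_sub[OF H finH that] n_def by simp
  have expn: "g [^] n \<in> A" if g: "g \<in> carrier G" for g
  proof -
    from g obtain k h where kh: "k \<in> K" "h \<in> H" "g = k \<otimes> h" using GKH unfolding K_def set_mult_def by blast
    have c: "k \<in> carrier G" "h \<in> carrier G" using kh KC HC by auto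
    have "A #> (g [^] n) = ((A #> k) \<otimes>\<^bsub>Q\<^esub> (A #> h)) [^]\<^bsub>Q\<^esub> n"
      using pi.hom_nat_pow c kh by simp
    also have "\<dots> = (A #> k) [^]\<^bsub>Q\<^esub> n \<otimes>\<^bsub>Q\<^esub> (A #> h) [^]\<^bsub>Q\<^esub> n"
      using comm_monoid.nat_pow_distrib[OF comm_group.axioms(1)[OF Qc]] c by simp
    also have "\<dots> = (A #> (k [^] n)) \<otimes>\<^bsub>Q\<^esub> (A #> (h [^] n))" using pi.hom_nat_pow c by simp
    also have "\<dots> = A" using powK[OF kh(1)] powH[OF kh(2)] kerI[OF subgroup.one_closed[OF subA]]
      QQ by simp
    finally show ?thesis using ker g by simp
  qed
  have Qcar: "carrier Q = (\<lambda>x. A #> x) ` carrier G" unfolding Q_def by (rule carrier_FactGroup)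
  have Qfin: "finite (carrier Q)" using Qcar fin by simp
  obtain X0 where X0: "X0 \<in> carrier Q" "carrier Q = range (\<lambda>i::int. X0 [^]\<^bsub>Q\<^esub> i)"
    using group.cyclic_group[OF Qg] cyc unfolding Q_def by auto
  have Qnat: "carrier Q = range (\<lambda>k::nat. X0 [^]\<^bsub>Q\<^esub> k)"
  proof
    have g1: "generate Q {X0} = {X0 [^]\<^bsub>Q\<^esub> (k::int) | k. k \<in> UNIV}"
      by (rule group.generate_pow[OF Qg X0(1)])
    have g2: "generate Q {X0} = {X0 [^]\<^bsub>Q\<^esub> (k::nat) | k. k \<in> UNIV}"
      by (rule group.generate_pow_on_finite_carrier[OF Qg Qfin X0(1)])
    show "carrier Q \<subseteq> range (\<lambda>k::nat. X0 [^]\<^bsub>Q\<^esub> k)"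
    proof
      fix z assume "z \<in> carrier Q"
      then obtain i :: int where "z = X0 [^]\<^bsub>Q\<^esub> i" using X0(2) by blast
      then have "z \<in> generate Q {X0}" unfolding g1 by blast
      then obtain k :: nat where "z = X0 [^]\<^bsub>Q\<^esub> k" unfolding g2 by blast
      then show "z \<in> range (\<lambda>k::nat. X0 [^]\<^bsub>Q\<^esub> k)" by blast
    qed
    show "range (\<lambda>k::nat. X0 [^]\<^bsub>Q\<^esub> k) \<subseteq> carrier Q"
      using monoid.nat_pow_closed[OF group.is_monoid[OF Qg] X0(1)] by blast
  qed
  obtain x where x: "x \<in> carrier G" "X0 = A #> x" using X0(1) Qcar by auto
  have piX: "A #> (x [^] k) = X0 [^]\<^bsub>Q\<^esub> k" for k :: nat using pi.hom_nat_pow x by simp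
  have Xn: "X0 [^]\<^bsub>Q\<^esub> n = \<one>\<^bsub>Q\<^esub>" using piX[of n] kerI[OF expn[OF x(1)]] one_Q by simp
  have Xmod: "X0 [^]\<^bsub>Q\<^esub> k = X0 [^]\<^bsub>Q\<^esub> (k mod n)" for k :: nat
  proof -
    have mon: "monoid Q" using group.is_monoid[OF Qg] .
    have "X0 [^]\<^bsub>Q\<^esub> (n * (k div n)) \<otimes>\<^bsub>Q\<^esub> X0 [^]\<^bsub>Q\<^esub> (k mod n)
          = X0 [^]\<^bsub>Q\<^esub> (n * (k div n) + k mod n)"
      by (rule monoid.nat_pow_mult[OF mon X0(1)])
    also have "n * (k div n) + k mod n = k" by simp
    finally have e: "X0 [^]\<^bsub>Q\<^esub> (n * (k div n)) \<otimes>\<^bsub>Q\<^esub> X0 [^]\<^bsub>Q\<^esub> (k mod n) = X0 [^]\<^bsub>Q\<^esub> k" .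
    have "X0 [^]\<^bsub>Q\<^esub> (n * (k div n)) = (X0 [^]\<^bsub>Q\<^esub> n) [^]\<^bsub>Q\<^esub> (k div n)"
      by (rule monoid.nat_pow_pow[OF mon X0(1), symmetric])
    also have "\<dots> = \<one>\<^bsub>Q\<^esub>" using Xn monoid.nat_pow_one[OF mon] by simp
    finally have "X0 [^]\<^bsub>Q\<^esub> (n * (k div n)) = \<one>\<^bsub>Q\<^esub>" .
    then show ?thesis using e monoid.l_one[OF mon monoid.nat_pow_closed[OF mon X0(1)]] by simp
  qed
  have cover: "carrier G \<subseteq> (\<Union>i\<in>{..<n}. A #> (x [^] i))"
  proof
    fix g assume g: "g \<in> carrier G"
    then have "A #> g \<in> carrier Q" using Qcar by simp
    then obtain k :: nat where "A #> g = X0 [^]\<^bsub>Q\<^esub> k" using Qnat by auto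
    then have "A #> g = A #> (x [^] (k mod n))" using Xmod piX by simp
    then have "g \<in> A #> (x [^] (k mod n))" using rcos_self[OF g subA] by simp
    moreover have "k mod n \<in> {..<n}" using n0 by simp
    ultimately show "g \<in> (\<Union>i\<in>{..<n}. A #> (x [^] i))" by blast
  qed
  have cardG: "card (carrier G) \<le> n * card A"
  proof -
    have "card (carrier G) \<le> card (\<Union>i\<in>{..<n}. A #> (x [^] i))"
      using cover by (rule card_mono[rotated]) (use finA in \<open>auto simp: r_coset_def\<close>)
    also have "\<dots> \<le> (\<Sum>i\<in>{..<n}. card (A #> (x [^] i)))" by (rule card_UN_le) simp
    also have "\<dots> = (\<Sum>i\<in>{..<n}. card A)"
    proof (rule sum.cong)
      fix i assume "i \<in> {..<n}"
      have "A #> (x [^] i) \<in> rcosets A" using rcosetsI[OF AC] x by simp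
      then show "card (A #> (x [^] i)) = card A" using card_rcosets_equal[OF _ AC] by simp
    qed simp
    finally show ?thesis by simp
  qed
  have HAall: "H <#> A = carrier G"
  proof -
    have sb: "H <#> A \<subseteq> carrier G" by (rule setmult_subset_G[OF HC AC])
    have cd: "card (H <#> A) = n * card A" using card_setmult[OF H subA HA finH finA] n_def by simp
    show ?thesis by (rule card_seteq[OF fin sb]) (use cd cardG in simp)
  qed
  have KAall: "K <#> A = carrier G"
  proof -
    have sb: "K <#> A \<subseteq> carrier G" by (rule setmult_subset_G[OF KC AC])
    have cd: "card (K <#> A) = n * card A" using card_setmult[OF Ksub subA KA finK finA] n_def cardK by simp
    show ?thesis by (rule card_seteq[OF fin sb]) (use cd cardG in simp)
  qed
  obtain k0 a0 where k0: "k0 \<in> K" "a0 \<in> A" "x = k0 \<otimes> a0" using x(1) KAall unfolding set_mult_def by blast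
  have k0C: "k0 \<in> carrier G" using k0 KC by auto
  have X0k0: "X0 = A #> k0"
  proof -
    have a0C: "a0 \<in> carrier G" using k0(2) AC by auto
    have "X0 = (A #> k0) \<otimes>\<^bsub>Q\<^esub> (A #> a0)" using x(2) k0(3) pi.hom_mult[OF k0C a0C] by simp
    also have "A #> a0 = \<one>\<^bsub>Q\<^esub>" using kerI[OF k0(2)] one_Q by simp
    also have "(A #> k0) \<otimes>\<^bsub>Q\<^esub> \<one>\<^bsub>Q\<^esub> = A #> k0"
      using group.is_monoid[OF Qg] Qcar k0C by (simp add: monoid.r_one)
    finally show ?thesis .
  qed
  have subpow: "y [^] (i::nat) \<in> V" if "subgroup V G" "y \<in> V" for V y i
    by (induction i) (simp_all add: subgroup.one_closed[OF that(1)] subgroup.m_closed[OF that(1)] that(2))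
  have Kpow: "\<exists>i::nat. k = k0 [^] i" if k: "k \<in> K" for k
  proof -
    have kC: "k \<in> carrier G" using k KC by auto
    have "A #> k \<in> carrier Q" using Qcar kC by simp
    then obtain i :: nat where "A #> k = X0 [^]\<^bsub>Q\<^esub> i" using Qnat by auto
    then have "A #> k = A #> (k0 [^] i)" using X0k0 pi.hom_nat_pow k0C by simp
    then have "k \<otimes> inv (k0 [^] i) \<in> A" using eqmod kC k0C by simp
    moreover have "k \<otimes> inv (k0 [^] i) \<in> K"
    proof -
      have "k0 [^] i \<in> K" by (rule subpow[OF Ksub k0(1)])
      then have "inv (k0 [^] i) \<in> K" by (rule subgroup.m_inv_closed[OF Ksub])
      then show ?thesis by (rule subgroup.m_closed[OF Ksub k])
    qed
    ultimately have "k \<otimes> inv (k0 [^] i) \<in> K \<inter> A" by simp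
    then have e1: "k \<otimes> inv (k0 [^] i) = \<one>" using KA by simp
    have pC: "k0 [^] i \<in> carrier G" using k0C by simp
    have "k = k \<otimes> (inv (k0 [^] i) \<otimes> k0 [^] i)" using kC pC by simp
    also have "\<dots> = (k \<otimes> inv (k0 [^] i)) \<otimes> k0 [^] i" using kC pC by (simp add: m_assoc)
    also have "\<dots> = k0 [^] i" using e1 pC by simp
    finally have "k = k0 [^] i" .
    then show ?thesis by blast
  qed
  obtain h1 a1 where h1: "h1 \<in> H" "a1 \<in> A" "k0 = h1 \<otimes> a1" using k0C HAall unfolding set_mult_def by blast
  have h1C: "h1 \<in> carrier G" using h1 HC by auto
  define b where "b = k0 \<otimes> inv h1"
  have bA: "b \<in> A"
  proof -
    have "b = h1 \<otimes> a1 \<otimes> inv h1" unfolding b_def using h1 by simp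
    then show ?thesis using N.inv_op_closed2[OF h1C h1(2)] by simp
  qed
  define M where "M = G\<lparr>carrier := A\<rparr>"
  define \<psi> where "\<psi> = (\<lambda>y. k0 \<otimes> y \<otimes> inv k0)"
  have Mm [simp]: "x \<otimes>\<^bsub>M\<^esub> y = x \<otimes> y" for x y unfolding M_def by simp
  have M1 [simp]: "\<one>\<^bsub>M\<^esub> = \<one>" unfolding M_def by simp
  have Mc [simp]: "carrier M = A" unfolding M_def by simp
  have Mpow: "x [^]\<^bsub>M\<^esub> (i::nat) = x [^] i" for x i unfolding M_def by (simp add: nat_pow_def)
  have cM: "comm_group M" unfolding M_def by (rule cA)
  have psi_hom: "\<psi> (x \<otimes>\<^bsub>M\<^esub> y) = \<psi> x \<otimes>\<^bsub>M\<^esub> \<psi> y" if "x \<in> A" "y \<in> A" for x y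
  proof -
    have c: "x \<in> carrier G" "y \<in> carrier G" using that AC by auto
    have ik: "inv k0 \<in> carrier G" using k0C by simp
    have "\<psi> x \<otimes> \<psi> y = (k0 \<otimes> x) \<otimes> (inv k0 \<otimes> (k0 \<otimes> (y \<otimes> inv k0)))"
      unfolding \<psi>_def using c k0C ik by (simp only: m_assoc m_closed)
    also have "inv k0 \<otimes> (k0 \<otimes> (y \<otimes> inv k0)) = y \<otimes> inv k0"
      using c k0C ik by (simp only: inv_cancel_left m_closed)
    also have "(k0 \<otimes> x) \<otimes> (y \<otimes> inv k0) = k0 \<otimes> (x \<otimes> y) \<otimes> inv k0"
      using c k0C ik by (simp only: m_assoc m_closed)
    finally have "\<psi> x \<otimes> \<psi> y = k0 \<otimes> (x \<otimes> y) \<otimes> inv k0" .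
    then show ?thesis unfolding \<psi>_def by simp
  qed
  have psi_into: "\<psi> x \<in> A" if "x \<in> A" for x unfolding \<psi>_def by (rule N.inv_op_closed2[OF k0C that])
  have psi_inj: "inj_on \<psi> A"
  proof (rule inj_onI)
    fix u v assume uv: "u \<in> A" "v \<in> A" "\<psi> u = \<psi> v"
    have c: "u \<in> carrier G" "v \<in> carrier G" using uv AC by auto
    have e: "k0 \<otimes> u \<otimes> inv k0 = k0 \<otimes> v \<otimes> inv k0" using uv(3) unfolding \<psi>_def .
    have "k0 \<otimes> u = (k0 \<otimes> u \<otimes> inv k0) \<otimes> k0" using c k0C by (simp add: m_assoc)
    also have "\<dots> = (k0 \<otimes> v \<otimes> inv k0) \<otimes> k0" using e by simp
    also have "\<dots> = k0 \<otimes> v" using c k0C by (simp add: m_assoc)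
    finally have "k0 \<otimes> u = k0 \<otimes> v" .
    then have "inv k0 \<otimes> (k0 \<otimes> u) = inv k0 \<otimes> (k0 \<otimes> v)" by simp
    then show "u = v" using c k0C by (simp only: inv_cancel_left)
  qed
  have csf: "cs M \<psi> b t = k0 [^] t \<otimes> inv (h1 [^] t)" for t
  proof (induction t)
    case 0 then show ?case by simp
  next
    case (Suc t)
    have c: "k0 [^] t \<in> carrier G" "h1 [^] t \<in> carrier G" using k0C h1C by auto
    have "cs M \<psi> b (Suc t) = k0 \<otimes> (k0 [^] t \<otimes> inv (h1 [^] t)) \<otimes> inv k0 \<otimes> (k0 \<otimes> inv h1)"
      using Suc unfolding \<psi>_def b_def by simp
    also have "\<dots> = (k0 \<otimes> k0 [^] t) \<otimes> (inv (h1 [^] t) \<otimes> inv h1)"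
      using c k0C h1C by (simp add: m_assoc inv_cancel_left)
    also have "k0 \<otimes> k0 [^] t = k0 [^] Suc t" by (rule nat_pow_Suc2[OF k0C, symmetric])
    also have "inv (h1 [^] t) \<otimes> inv h1 = inv (h1 [^] Suc t)"
    proof -
      have "inv (h1 [^] Suc t) = inv (h1 \<otimes> h1 [^] t)" by (simp only: nat_pow_Suc2[OF h1C])
      also have "\<dots> = inv (h1 [^] t) \<otimes> inv h1" by (rule inv_mult_group[OF h1C c(2)])
      finally show ?thesis by simp
    qed
    finally show ?case .
  qed
  have csA: "cs M \<psi> b t \<in> A" for t
    by (induction t) (simp_all add: subgroup.one_closed[OF subA] psi_into bA subgroup.m_closed[OF subA])
  have Arange: "A = range (cs M \<psi> b)"
  proof
    show "range (cs M \<psi> b) \<subseteq> A" using csA by auto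
    show "A \<subseteq> range (cs M \<psi> b)"
    proof
      fix a assume a: "a \<in> A"
      then have aC: "a \<in> carrier G" using AC by auto
      then obtain k h where kh: "k \<in> K" "h \<in> H" "a = k \<otimes> h" using GKH unfolding K_def set_mult_def by blast
      obtain i :: nat where i: "k = k0 [^] i" using Kpow[OF kh(1)] by blast
      have c: "k0 [^] i \<in> carrier G" "h1 [^] i \<in> carrier G" "h \<in> carrier G" using k0C h1C kh HC by auto
      define z where "z = inv (cs M \<psi> b i) \<otimes> a"
      have "z = h1 [^] i \<otimes> h" unfolding z_def csf kh(3) i using c
        by (simp add: inv_mult_group m_assoc inv_cancel_left)
      moreover have "h1 [^] i \<otimes> h \<in> H" by (rule subgroup.m_closed[OF H subpow[OF H h1(1)] kh(2)])
      ultimately have zH: "z \<in> H" by simp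
      have "z \<in> A" unfolding z_def
        by (rule subgroup.m_closed[OF subA subgroup.m_inv_closed[OF subA csA] a])
      then have "z \<in> H \<inter> A" using zH by simp
      then have z1: "z = \<one>" using HA by simp
      have cC: "cs M \<psi> b i \<in> carrier G" using csA AC by auto
      have "a = cs M \<psi> b i \<otimes> z" unfolding z_def using cC aC by (simp add: inv_cancel_left2)
      then have "a = cs M \<psi> b i" using z1 cC by simp
      then show "a \<in> range (cs M \<psi> b)" by simp
    qed
  qed
  have ci: "cinst M A \<psi> b"
  proof (rule cinst.intro[OF cM cinst_axioms.intro])
    show "finite (carrier M)" using finA by simp
    show "subgroup A M" using group.subgroup_self[OF comm_group.axioms(2)[OF cM]] by simp
    show "\<psi> (x \<otimes>\<^bsub>M\<^esub> y) = \<psi> x \<otimes>\<^bsub>M\<^esub> \<psi> y" if "x \<in> A" "y \<in> A" for x y using psi_hom that .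
    show "\<psi> x \<in> A" if "x \<in> A" for x using psi_into that .
    show "inj_on \<psi> A" by (rule psi_inj)
    show "b \<in> A" by (rule bA)
    show "A = range (cs M \<psi> b)" by (rule Arange)
  qed
  have bound: "card A \<le> 2 * card (generate M {b})" using comm_group.main_pure[OF cM ci] .
  have "generate M {b} = range (\<lambda>k::nat. b [^]\<^bsub>M\<^esub> k)"
    using group.gen_nat[OF comm_group.axioms(2)[OF cM]] finA bA by simp
  also have "\<dots> = range (\<lambda>k::nat. b [^] k)" using Mpow by simp
  also have "\<dots> = generate G {b}" using gen_nat[OF fin] bA AC by auto
  finally show ?thesis using bound bA by auto
qed


theorem lemma3p15:
  fixes G (structure) and A H :: "'a set" and s :: "'a \<Rightarrow> 'a"
  assumes "group G" and "finite (carrier G)"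
    and "A \<lhd> G" and "comm_group (G\<lparr>carrier := A\<rparr>)"
    and "cyclic_group (G Mod A)"
    and "s \<in> iso G G"
    and "\<forall>x \<in> carrier G. s (s x) = x" and "\<exists>x \<in> carrier G. s x \<noteq> x"
    and "s ` A = A"
    and "subgroup H G" and "H \<inter> A = {\<one>}"
    and "carrier G = (s ` H) <#> H"
  shows "\<exists>C. subgroup C G \<and> C \<subseteq> A \<and> cyclic_group (subgroup_generated G C)
             \<and> card A \<le> 2 * card C"
proof -
  interpret group G by (rule assms(1))
  obtain b where bA: "b \<in> A" and bd: "card A \<le> 2 * card (generate G {b})"
    using frontend[OF assms(2,3,4,5,6,9,10,11,12)] by (elim bexE)
  have subA: "subgroup A G" by (rule normal_imp_subgroup[OF assms(3)])
  have bC: "b \<in> carrier G" using subgroup.subset[OF subA] bA by (rule subsetD)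
  define C where "C = generate G {b}"
  have subC: "subgroup C G" unfolding C_def using generate_is_subgroup bC by simp
  have CA: "C \<subseteq> A" unfolding C_def using generate_subgroup_incl[OF _ subA] bA by simp
  have CC: "C \<subseteq> carrier G" by (rule subgroup.subset[OF subC])
  have gC: "generate G C = C"
  proof
    show "generate G C \<subseteq> C" by (rule generate_subgroup_incl[OF subset_refl subC])
    show "C \<subseteq> generate G C" by (rule subsetI, rule generate.incl)
  qed
  have "subgroup_generated G C = subgroup_generated G {b}"
    unfolding subgroup_generated_def using CC gC bC C_def by (simp add: Int_absorb1)
  then have cyc: "cyclic_group (subgroup_generated G C)" using cyclic_group_generated by simp
  show ?thesis
    by (rule exI[of _ C]) (use subC CA cyc bd C_def in simp)
qed

end
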